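(* Let $g,\ell$ be kernels on $X$ (with $g_z\ne0$, $\ell_z\ne0$ for all $z$) such that $\ell/g$ is positive semi-definite. Then for every $n\ge2$ and every $n$-point subset $\{\mu_1,\dots,\mu_n\}$ of $X$, $$\mathrm{dist}\big(\hat g_{\mu_1},\mathrm{span}\{\hat g_{\mu_2},\dots,\hat g_{\mu_n}\}\big)\le\mathrm{dist}\big(\hat\ell_{\mu_1},\mathrm{span}\{\hat\ell_{\mu_2},\dots,\hat\ell_{\mu_n}\}\big),$$ the distances being taken in $\mathcal{H}_g$ and $\mathcal{H}_\ell$ respectively.
   Context: A kernel on $X$ is a positive semi-definite function $k:X\times X\to\mathbb{C}$; $\mathcal{H}_k$ its reproducing kernel Hilbert space, $k_w=k(\cdot,w)$, $\hat k_w=k_w/\|k_w\|$. "$\ell/g$ positive semi-definite" means $\ell=gh$ for some positive semi-definite kernel $h$ on $X$. *)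

theory Defs
  imports "HOL-Analysis.Analysis"
begin

definition psd_kernel :: "('a \<Rightarrow> 'a \<Rightarrow> complex) \<Rightarrow> bool" where
  "psd_kernel k \<longleftrightarrow>
     (\<forall>(m::nat) (x::nat \<Rightarrow> 'a) (c::nat \<Rightarrow> complex).
        (\<Sum>i<m. \<Sum>j<m. cnj (c i) * c j * k (x i) (x j)) \<in> \<real> \<and>
        0 \<le> Re (\<Sum>i<m. \<Sum>j<m. cnj (c i) * c j * k (x i) (x j)))"

text \<open>Squared RKHS norm of the finite combination sum_{x in F} a x * k_x, where
  k_x = k(-,x), using <k_y, k_x> = k(x,y).\<close>
definition comb_norm2 :: "('a \<Rightarrow> 'a \<Rightarrow> complex) \<Rightarrow> ('a \<Rightarrow> complex) \<Rightarrow> 'a set \<Rightarrow> real" where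
  "comb_norm2 k a F = Re (\<Sum>x\<in>F. \<Sum>y\<in>F. cnj (a x) * a y * k x y)"

definition kernel_fn_norm :: "('a \<Rightarrow> 'a \<Rightarrow> complex) \<Rightarrow> 'a \<Rightarrow> real" where
  "kernel_fn_norm k w = sqrt (Re (k w w))"

text \<open>Gram kernel of the normalized kernel functions: <hat k_y, hat k_x> = k(x,y)/(||k_x|| ||k_y||).\<close>
definition normalized_kernel :: "('a \<Rightarrow> 'a \<Rightarrow> complex) \<Rightarrow> 'a \<Rightarrow> 'a \<Rightarrow> complex" where
  "normalized_kernel k x y = k x y / (of_real (kernel_fn_norm k x) * of_real (kernel_fn_norm k y))"

text \<open>The span is finite dimensional, hence closed, so this is the Hilbert-space distance.\<close>
definition dist_to_span :: "('a \<Rightarrow> 'a \<Rightarrow> complex) \<Rightarrow> 'a \<Rightarrow> 'a set \<Rightarrow> real" where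
  "dist_to_span k w S =
     (INF c \<in> (UNIV :: ('a \<Rightarrow> complex) set).
        sqrt (comb_norm2 (normalized_kernel k) (\<lambda>x. if x = w then 1 else - c x) (insert w S)))"

end

theory Submission
  imports Defs
begin

definition qf :: "('a \<Rightarrow> 'a \<Rightarrow> complex) \<Rightarrow> 'a set \<Rightarrow> ('a \<Rightarrow> complex) \<Rightarrow> complex" where
  "qf A F c = (\<Sum>x\<in>F. \<Sum>y\<in>F. cnj (c x) * c y * A x y)"

definition psd_on :: "('a \<Rightarrow> 'a \<Rightarrow> complex) \<Rightarrow> 'a set \<Rightarrow> bool" where
  "psd_on A F \<longleftrightarrow> (\<forall>c. qf A F c \<in> \<real> \<and> 0 \<le> Re (qf A F c))"

lemma qf_restrict:
  assumes "finite F" "G \<subseteq> F" "\<forall>z\<in>F - G. c z = 0"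
  shows "qf A F c = qf A G c"
proof -
  have fG: "finite G" using assms finite_subset by blast
  have "qf A F c = (\<Sum>x\<in>F. \<Sum>y\<in>G. cnj (c x) * c y * A x y)"
    unfolding qf_def
    by (rule sum.cong[OF refl], rule sum.mono_neutral_right) (use assms fG in auto)
  also have "\<dots> = (\<Sum>x\<in>G. \<Sum>y\<in>G. cnj (c x) * c y * A x y)"
    by (rule sum.mono_neutral_right) (use assms fG in auto)
  finally show ?thesis unfolding qf_def .
qed

lemma qf_two:
  assumes "finite F" "x \<in> F" "y \<in> F" "x \<noteq> y"
  shows "qf A F (\<lambda>z. if z = x then \<alpha> else if z = y then \<beta> else 0) =
    cnj \<alpha> * \<alpha> * A x x + cnj \<alpha> * \<beta> * A x y + cnj \<beta> * \<alpha> * A y x + cnj \<beta> * \<beta> * A y y"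
proof -
  have "qf A F (\<lambda>z. if z = x then \<alpha> else if z = y then \<beta> else 0) =
        qf A {x,y} (\<lambda>z. if z = x then \<alpha> else if z = y then \<beta> else 0)"
    by (rule qf_restrict) (use assms in auto)
  also have "\<dots> = cnj \<alpha> * \<alpha> * A x x + cnj \<alpha> * \<beta> * A x y + cnj \<beta> * \<alpha> * A y x + cnj \<beta> * \<beta> * A y y"
    unfolding qf_def using assms(4) by (simp add: algebra_simps)
  finally show ?thesis .
qed

lemma qf_one:
  assumes "finite F" "x \<in> F"
  shows "qf A F (\<lambda>z. if z = x then \<alpha> else 0) = cnj \<alpha> * \<alpha> * A x x"
proof -
  have "qf A F (\<lambda>z. if z = x then \<alpha> else 0) = qf A {x} (\<lambda>z. if z = x then \<alpha> else 0)"
    by (rule qf_restrict) (use assms in auto)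
  then show ?thesis unfolding qf_def by simp
qed

lemma psd_diag:
  assumes "psd_on A F" "finite F" "x \<in> F"
  shows "A x x \<in> \<real>" "0 \<le> Re (A x x)"
  using assms qf_one[OF assms(2,3), of A 1] unfolding psd_on_def by (metis mult_1 complex_cnj_one)+

lemma psd_herm:
  assumes "psd_on A F" "finite F" "x \<in> F" "y \<in> F"
  shows "A y x = cnj (A x y)"
proof (cases "x = y")
  case True
  then show ?thesis using psd_diag[OF assms(1,2,3)] by (simp add: Reals_cnj_iff)
next
  case False
  have d1: "Im (A x x) = 0" "Im (A y y) = 0"
    using psd_diag[OF assms(1,2)] assms(3,4) by (auto simp: complex_is_Real_iff)
  have "qf A F (\<lambda>z. if z = x then 1 else if z = y then 1 else 0) \<in> \<real>"
    using assms(1) unfolding psd_on_def by blast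
  then have e1: "Im (A x y) + Im (A y x) = 0"
    using qf_two[OF assms(2,3,4) False, of A 1 1] d1 by (simp add: complex_is_Real_iff)
  have "qf A F (\<lambda>z. if z = x then 1 else if z = y then \<i> else 0) \<in> \<real>"
    using assms(1) unfolding psd_on_def by blast
  then have e2: "Re (A x y) - Re (A y x) = 0"
    using qf_two[OF assms(2,3,4) False, of A 1 \<i>] d1 by (simp add: complex_is_Real_iff)
  show ?thesis using e1 e2 by (simp add: complex_eq_iff)
qed

lemma psd_zero:
  assumes "psd_on A F" "finite F" "a \<in> F" "A a a = 0" "x \<in> F"
  shows "A a x = 0"
proof (rule ccontr)
  assume ne: "A a x \<noteq> 0"
  define s where "s = A a x"
  have xa: "x \<noteq> a" using ne assms(4) by auto
  have h: "A x a = cnj s" using psd_herm[OF assms(1,2,3,5)] s_def by simp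
  have ns: "Re (cnj s * s) > 0" using ne s_def
    by (simp add: power2_eq_square[symmetric] complex_eq_iff sum_power2_gt_zero_iff)
  define r where "r = (Re (A x x) + 1) / (2 * Re (cnj s * s))"
  define \<alpha> where "\<alpha> = - of_real r * s"
  have aux: "\<And>q::real. q > 0 \<Longrightarrow> 2 * ((Re (A x x) + 1) / (2*q)) * q = Re (A x x) + 1"
    by (simp add: field_simps)
  have rq: "2 * r * Re (cnj s * s) = Re (A x x) + 1" unfolding r_def by (rule aux[OF ns])
  have "0 \<le> Re (qf A F (\<lambda>z. if z = a then \<alpha> else if z = x then 1 else 0))"
    using assms(1) unfolding psd_on_def by blast
  also have "qf A F (\<lambda>z. if z = a then \<alpha> else if z = x then 1 else 0)
     = cnj \<alpha> * s + \<alpha> * cnj s + A x x"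
    using qf_two[OF assms(2,3,5) xa[symmetric], of A \<alpha> 1] assms(4) h s_def by simp
  also have "Re (cnj \<alpha> * s + \<alpha> * cnj s + A x x) = Re (A x x) - 2 * r * Re (cnj s * s)"
    unfolding \<alpha>_def by (simp add: algebra_simps)
  finally have "0 \<le> Re (A x x) - 2 * r * Re (cnj s * s)" .
  then show False using rq by linarith
qed

lemma psd_subset:
  assumes "psd_on A F" "finite F" "G \<subseteq> F"
  shows "psd_on A G"
  unfolding psd_on_def
proof
  fix c
  have "qf A G c = qf A G (\<lambda>z. if z \<in> G then c z else 0)"
    unfolding qf_def by (intro sum.cong refl) auto
  also have "\<dots> = qf A F (\<lambda>z. if z \<in> G then c z else 0)"
    by (rule qf_restrict[symmetric]) (use assms in auto)
  finally show "qf A G c \<in> \<real> \<and> 0 \<le> Re (qf A G c)" using assms(1) unfolding psd_on_def by simp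
qed


lemma schur_compl_identity:
  fixes A :: "'a \<Rightarrow> 'a \<Rightarrow> complex"
  assumes fin: "finite F" and aF: "a \<notin> F" and Ar: "cnj (A a a) = A a a" and nz: "A a a \<noteq> 0"
  shows "qf (\<lambda>x y. A x y - A x a * A a y / A a a) F c =
         qf A (insert a F) (c(a := - (\<Sum>y\<in>F. c y * A a y) / A a a))"
proof -
  define s where "s = (\<Sum>y\<in>F. c y * A a y)"
  define p where "p = (\<Sum>x\<in>F. cnj (c x) * A x a)"
  define t where "t = - s / A a a"
  define c' where "c' = c(a := t)"
  have cF: "\<And>x. x \<in> F \<Longrightarrow> c' x = c x" unfolding c'_def using aF by auto
  have ca: "c' a = t" unfolding c'_def by simp
  have "qf A (insert a F) c' =
     cnj t * t * A a a + (\<Sum>y\<in>F. cnj t * c y * A a y) + (\<Sum>x\<in>F. cnj (c x) * t * A x a)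
     + qf A F c"
    unfolding qf_def using fin aF cF ca by (simp add: sum.distrib sum.insert algebra_simps)
  also have "(\<Sum>y\<in>F. cnj t * c y * A a y) = cnj t * s"
    unfolding s_def by (simp add: sum_distrib_left mult.assoc)
  also have "(\<Sum>x\<in>F. cnj (c x) * t * A x a) = t * p"
    unfolding p_def by (simp add: sum_distrib_left algebra_simps)
  also have "cnj t * t * A a a + cnj t * s + t * p + qf A F c = qf A F c - p * s / A a a"
  proof -
    have ct: "cnj t = - cnj s / A a a" unfolding t_def using Ar by (simp add: complex_cnj_divide)
    show ?thesis unfolding ct unfolding t_def using nz by (simp add: field_simps)
  qed
  also have "qf A F c - p * s / A a a = qf (\<lambda>x y. A x y - A x a * A a y / A a a) F c"
  proof -
    have "p * s / A a a = (\<Sum>x\<in>F. \<Sum>y\<in>F. (cnj (c x) * A x a) * (c y * A a y) / A a a)"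
      unfolding p_def s_def sum_product sum_divide_distrib ..
    also have "\<dots> = (\<Sum>x\<in>F. \<Sum>y\<in>F. cnj (c x) * c y * (A x a * A a y / A a a))"
      by (intro sum.cong refl) (simp add: algebra_simps)
    finally have "p * s / A a a = (\<Sum>x\<in>F. \<Sum>y\<in>F. cnj (c x) * c y * (A x a * A a y / A a a))" .
    then show ?thesis unfolding qf_def by (simp add: sum_subtractf algebra_simps)
  qed
  finally show ?thesis unfolding c'_def t_def s_def by (rule sym)
qed

lemma psd_decomp:
  assumes "finite F" "psd_on A F"
  shows "\<exists>v. \<forall>x\<in>F. \<forall>y\<in>F. A x y = (\<Sum>k\<in>F. v k x * cnj (v k y))"
  using assms
proof (induction F arbitrary: A rule: finite_induct)
  case empty
  then show ?case by simp
next
  case (insert a F)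
  let ?F1 = "insert a F"
  have fin1: "finite ?F1" using insert by simp
  have aF1: "a \<in> ?F1" by simp
  have Ar: "A a a \<in> \<real>" and Ap: "0 \<le> Re (A a a)" using psd_diag[OF insert.prems fin1 aF1] by auto
  have herm: "\<And>x y. x \<in> ?F1 \<Longrightarrow> y \<in> ?F1 \<Longrightarrow> A y x = cnj (A x y)"
    using psd_herm[OF insert.prems fin1] by blast
  show ?case
  proof (cases "Re (A a a) = 0")
    case True
    have A0: "A a a = 0" using True Ar by (simp add: complex_eq_iff complex_is_Real_iff)
    have row: "\<And>x. x \<in> ?F1 \<Longrightarrow> A a x = 0" using psd_zero[OF insert.prems fin1 aF1 A0] by blast
    have col: "\<And>x. x \<in> ?F1 \<Longrightarrow> A x a = 0" using row herm aF1 by (metis complex_cnj_zero)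
    have "psd_on A F" by (rule psd_subset[OF insert.prems fin1]) auto
    then obtain v where v: "\<forall>x\<in>F. \<forall>y\<in>F. A x y = (\<Sum>k\<in>F. v k x * cnj (v k y))"
      using insert.IH by blast
    define v' where "v' = (\<lambda>k x. if k = a \<or> x = a then 0 else v k x)"
    have "\<forall>x\<in>?F1. \<forall>y\<in>?F1. A x y = (\<Sum>k\<in>?F1. v' k x * cnj (v' k y))"
    proof (intro ballI)
      fix x y assume x: "x \<in> ?F1" and y: "y \<in> ?F1"
      have s: "(\<Sum>k\<in>?F1. v' k x * cnj (v' k y)) = (\<Sum>k\<in>F. v' k x * cnj (v' k y))"
        using insert.hyps by (simp add: v'_def)
      show "A x y = (\<Sum>k\<in>?F1. v' k x * cnj (v' k y))"
      proof (cases "x = a \<or> y = a")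
        case True
        then show ?thesis using row col x y s by (auto simp: v'_def)
      next
        case False
        then have "x \<in> F" "y \<in> F" using x y by auto
        then show ?thesis unfolding s using v False insert.hyps
          by (auto simp: v'_def intro!: sum.cong)
      qed
    qed
    then show ?thesis by blast
  next
    case False
    define p where "p = Re (A a a)"
    have pp: "p > 0" using False Ap p_def by simp
    have Ap': "A a a = of_real p" using Ar p_def by (simp add: complex_eq_iff complex_is_Real_iff)
    have nz: "A a a \<noteq> 0" using pp Ap' by simp
    have cr: "cnj (A a a) = A a a" using Ap' by simp
    define B where "B = (\<lambda>x y. A x y - A x a * A a y / A a a)"
    have "psd_on B F" unfolding psd_on_def
    proof
      fix c
      have "qf B F c = qf A ?F1 (c(a := - (\<Sum>y\<in>F. c y * A a y) / A a a))"
        unfolding B_def by (rule schur_compl_identity[where A=A and a=a and F=F]) (use insert.hyps cr nz in auto)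
      then show "qf B F c \<in> \<real> \<and> 0 \<le> Re (qf B F c)" using insert.prems unfolding psd_on_def by simp
    qed
    then obtain w where w: "\<forall>x\<in>F. \<forall>y\<in>F. B x y = (\<Sum>k\<in>F. w k x * cnj (w k y))"
      using insert.IH by blast
    define sp where "sp = complex_of_real (sqrt p)"
    have sp2: "sp * sp = A a a" unfolding sp_def Ap' of_real_mult[symmetric] using pp by simp
    have spnz: "sp \<noteq> 0" using pp sp_def by simp
    have csp: "cnj sp = sp" unfolding sp_def by simp
    define v where "v = (\<lambda>k x. if k = a then A x a / sp else if x = a then 0 else w k x)"
    have "\<forall>x\<in>?F1. \<forall>y\<in>?F1. A x y = (\<Sum>k\<in>?F1. v k x * cnj (v k y))"
    proof (intro ballI)
      fix x y assume x: "x \<in> ?F1" and y: "y \<in> ?F1"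
      have s: "(\<Sum>k\<in>?F1. v k x * cnj (v k y)) = A x a / sp * cnj (A y a / sp) + (\<Sum>k\<in>F. v k x * cnj (v k y))"
        using insert.hyps by (simp add: v_def)
      have hy: "cnj (A y a) = A a y" using herm[OF aF1 y] by simp
      have c2: "cnj (A y a / sp) = A a y / sp" using hy csp by (simp add: complex_cnj_divide)
      have first: "A x a / sp * cnj (A y a / sp) = A x a * A a y / A a a"
        unfolding c2 sp2[symmetric] by simp
      show "A x y = (\<Sum>k\<in>?F1. v k x * cnj (v k y))"
      proof (cases "x = a \<or> y = a")
        case True
        then have "(\<Sum>k\<in>F. v k x * cnj (v k y)) = 0" using insert.hyps
          by (auto simp: v_def intro!: sum.neutral)
        then show ?thesis unfolding s first using True nz by auto
      next
        case False
        then have xF: "x \<in> F" and yF: "y \<in> F" using x y by auto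
        have "(\<Sum>k\<in>F. v k x * cnj (v k y)) = B x y" using w xF yF False insert.hyps
          by (auto simp: v_def intro!: sum.cong)
        then show ?thesis unfolding s first B_def by simp
      qed
    qed
    then show ?thesis by blast
  qed
qed


lemma schur_product:
  assumes fin: "finite F" and A: "psd_on A F" and B: "psd_on B F"
  shows "psd_on (\<lambda>x y. A x y * B x y) F"
proof -
  obtain v where v: "\<forall>x\<in>F. \<forall>y\<in>F. A x y = (\<Sum>k\<in>F. v k x * cnj (v k y))"
    using psd_decomp[OF fin A] by blast
  show ?thesis unfolding psd_on_def
  proof
    fix c
    have "qf (\<lambda>x y. A x y * B x y) F c = (\<Sum>k\<in>F. qf B F (\<lambda>x. c x * cnj (v k x)))"
    proof -
      have "qf (\<lambda>x y. A x y * B x y) F c =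
            (\<Sum>x\<in>F. \<Sum>y\<in>F. \<Sum>k\<in>F. cnj (c x * cnj (v k x)) * (c y * cnj (v k y)) * B x y)"
        unfolding qf_def
      proof (intro sum.cong refl)
        fix x y assume x: "x \<in> F" and y: "y \<in> F"
        show "cnj (c x) * c y * (A x y * B x y) =
          (\<Sum>k\<in>F. cnj (c x * cnj (v k x)) * (c y * cnj (v k y)) * B x y)"
          using v x y by (simp add: sum_distrib_left sum_distrib_right mult_ac)
      qed
      also have "\<dots> = (\<Sum>x\<in>F. \<Sum>k\<in>F. \<Sum>y\<in>F. cnj (c x * cnj (v k x)) * (c y * cnj (v k y)) * B x y)"
        by (rule sum.cong[OF refl], rule sum.swap)
      also have "\<dots> = (\<Sum>k\<in>F. \<Sum>x\<in>F. \<Sum>y\<in>F. cnj (c x * cnj (v k x)) * (c y * cnj (v k y)) * B x y)"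
        by (rule sum.swap)
      finally show ?thesis unfolding qf_def .
    qed
    moreover have "(\<Sum>k\<in>F. qf B F (\<lambda>x. c x * cnj (v k x))) \<in> \<real>"
      using B unfolding psd_on_def by (intro sum_in_Reals) blast
    moreover have "0 \<le> Re (\<Sum>k\<in>F. qf B F (\<lambda>x. c x * cnj (v k x)))"
      using B unfolding psd_on_def Re_sum by (intro sum_nonneg) blast
    ultimately show "qf (\<lambda>x y. A x y * B x y) F c \<in> \<real> \<and> 0 \<le> Re (qf (\<lambda>x y. A x y * B x y) F c)"
      by simp
  qed
qed

lemma psd_kernel_on:
  assumes "psd_kernel k" "finite F"
  shows "psd_on k F"
  unfolding psd_on_def
proof
  fix c
  obtain f where f: "bij_betw f {..<card F} F" using ex_bij_betw_nat_finite[OF assms(2)] by (auto simp: lessThan_atLeast0)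
  have "qf k F c = (\<Sum>i<card F. \<Sum>j<card F. cnj (c (f i)) * c (f j) * k (f i) (f j))"
    unfolding qf_def
    by (subst sum.reindex_bij_betw[OF f, symmetric], rule sum.cong[OF refl],
        subst sum.reindex_bij_betw[OF f, symmetric], rule refl)
  then show "qf k F c \<in> \<real> \<and> 0 \<le> Re (qf k F c)"
    using assms(1) unfolding psd_kernel_def
    apply -
    apply (drule spec[where x="card F"], drule spec[where x=f], drule spec[where x="\<lambda>i. c (f i)"])
    apply simp
    done
qed

lemma psd_scale:
  assumes "psd_on k F"
  shows "psd_on (\<lambda>x y. k x y / (complex_of_real (n x) * complex_of_real (n y))) F"
  unfolding psd_on_def
proof
  fix c
  have "qf (\<lambda>x y. k x y / (complex_of_real (n x) * complex_of_real (n y))) F c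
        = qf k F (\<lambda>x. c x / complex_of_real (n x))"
    unfolding qf_def by (intro sum.cong refl) (simp add: complex_cnj_divide divide_inverse)
  then show "qf (\<lambda>x y. k x y / (complex_of_real (n x) * complex_of_real (n y))) F c \<in> \<real> \<and>
     0 \<le> Re (qf (\<lambda>x y. k x y / (complex_of_real (n x) * complex_of_real (n y))) F c)"
    using assms unfolding psd_on_def by simp
qed


lemma qf_minus_point:
  assumes "finite F" "w \<in> F"
  shows "qf (\<lambda>x y. K x y - r * (if x = w \<and> y = w then 1 else 0)) F c = qf K F c - r * (cnj (c w) * c w)"
proof -
  have "qf (\<lambda>x y. K x y - r * (if x = w \<and> y = w then 1 else 0)) F c =
        qf K F c - (\<Sum>x\<in>F. \<Sum>y\<in>F. cnj (c x) * c y * (r * (if x = w \<and> y = w then 1 else 0)))"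
    unfolding qf_def by (simp add: right_diff_distrib sum_subtractf)
  also have "(\<Sum>x\<in>F. \<Sum>y\<in>F. cnj (c x) * c y * (r * (if x = w \<and> y = w then 1 else 0)))
      = (\<Sum>x\<in>F. if x = w then cnj (c w) * c w * r else 0)"
    using assms by (intro sum.cong refl) (auto simp: if_distrib cong: if_cong)
  also have "\<dots> = r * (cnj (c w) * c w)" using assms by (simp add: mult_ac)
  finally show ?thesis .
qed

lemma qf_smult:
  "qf K F (\<lambda>x. t * a x) = cnj t * t * qf K F a"
  unfolding qf_def by (simp add: sum_distrib_left mult_ac)


lemma psd_kernel_diag:
  assumes "psd_kernel k"
  shows "k x x \<in> \<real>" "0 \<le> Re (k x x)"
  using psd_diag[OF psd_kernel_on[OF assms, of "{x}"]] by auto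

lemma Real_re: "z \<in> \<real> \<Longrightarrow> z = complex_of_real (Re z)"
  by (simp add: complex_eq_iff complex_is_Real_iff)

theorem lemma4p8:
  fixes g l :: "'a \<Rightarrow> 'a \<Rightarrow> complex"
    and n :: nat and \<mu> :: "nat \<Rightarrow> 'a"
  assumes "psd_kernel g" and "psd_kernel l"
    and "\<forall>z. g z z \<noteq> 0" and "\<forall>z. l z z \<noteq> 0"
    and "\<exists>h. psd_kernel h \<and> (\<forall>x y. l x y = g x y * h x y)"
    and "n \<ge> 2" and "inj_on \<mu> {1..n}"
  shows "dist_to_span g (\<mu> 1) (\<mu> ` {2..n}) \<le> dist_to_span l (\<mu> 1) (\<mu> ` {2..n})"
proof -
  obtain h where hpsd: "psd_kernel h" and lgh: "\<And>x y. l x y = g x y * h x y" using assms(5) by blast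
  define w where "w = \<mu> 1"
  define S where "S = \<mu> ` {2..n}"
  define F where "F = insert w S"
  have finF: "finite F" unfolding F_def S_def by simp
  have wF: "w \<in> F" unfolding F_def by simp
  define G where "G = normalized_kernel g"
  define L where "L = normalized_kernel l"
  define hn where "hn = (\<lambda>x y. h x y / (complex_of_real (kernel_fn_norm h x) * complex_of_real (kernel_fn_norm h y)))"
  have Gpsd: "psd_on G F" unfolding G_def normalized_kernel_def[abs_def]
    by (rule psd_scale[OF psd_kernel_on[OF assms(1) finF]])
  have hnpsd: "psd_on hn F" unfolding hn_def
    by (rule psd_scale[OF psd_kernel_on[OF hpsd finF]])
  have nl: "kernel_fn_norm l x = kernel_fn_norm g x * kernel_fn_norm h x" for x
  proof -
    have "l x x = complex_of_real (Re (g x x)) * complex_of_real (Re (h x x))"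
      using lgh Real_re[OF psd_kernel_diag(1)[OF assms(1)]] Real_re[OF psd_kernel_diag(1)[OF hpsd]]
      by metis
    then have "Re (l x x) = Re (g x x) * Re (h x x)" by (metis Re_complex_of_real of_real_mult)
    then show ?thesis unfolding kernel_fn_norm_def by (simp add: real_sqrt_mult)
  qed
  have LGh: "L x y = G x y * hn x y" for x y
    unfolding L_def G_def hn_def normalized_kernel_def nl lgh
    by (simp add: divide_inverse inverse_mult_distrib mult_ac)
  have hww: "hn w w = 1"
  proof -
    have "h w w \<noteq> 0" using assms(4) lgh by auto
    moreover have hr: "h w w = complex_of_real (Re (h w w))" by (rule Real_re[OF psd_kernel_diag(1)[OF hpsd]])
    ultimately have pos: "Re (h w w) > 0" using psd_kernel_diag(2)[OF hpsd, of w] by (metis less_eq_real_def of_real_0)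
    have "complex_of_real (kernel_fn_norm h w) * complex_of_real (kernel_fn_norm h w) = h w w"
      unfolding kernel_fn_norm_def of_real_mult[symmetric] using pos
      by (simp add: hr[symmetric])
    then show ?thesis unfolding hn_def using \<open>h w w \<noteq> 0\<close> by simp
  qed
  define coef where "coef = (\<lambda>c::'a \<Rightarrow> complex. \<lambda>x. if x = w then 1 else - c x)"
  have dg: "dist_to_span g w S = (INF c. sqrt (Re (qf G F (coef c))))"
    unfolding dist_to_span_def comb_norm2_def qf_def G_def F_def coef_def ..
  have dl: "dist_to_span l w S = (INF c. sqrt (Re (qf L F (coef c))))"
    unfolding dist_to_span_def comb_norm2_def qf_def L_def F_def coef_def ..
  define d where "d = dist_to_span g w S"
  have Qg0: "0 \<le> Re (qf G F a)" for a using Gpsd unfolding psd_on_def by blast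
  have d0: "0 \<le> d" unfolding d_def dg by (rule cINF_greatest) (auto simp: Qg0)
  have bdd: "bdd_below (range (\<lambda>c. sqrt (Re (qf G F (coef c)))))"
    by (rule bdd_belowI[where m=0]) (auto simp: Qg0)
  have key: "d\<^sup>2 \<le> Re (qf G F a)" if aw: "a w = 1" for a
  proof -
    have "coef (\<lambda>x. - a x) = a" unfolding coef_def using aw by auto
    then have "d \<le> sqrt (Re (qf G F a))" unfolding d_def dg
      by (metis (no_types, lifting) bdd cINF_lower UNIV_I)
    then have "d\<^sup>2 \<le> (sqrt (Re (qf G F a)))\<^sup>2" using d0 by (simp add: power_mono)
    then show ?thesis using Qg0 by simp
  qed
  define A where "A = (\<lambda>x y. G x y - complex_of_real (d\<^sup>2) * (if x = w \<and> y = w then 1 else 0))"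
  have Apsd: "psd_on A F" unfolding psd_on_def
  proof
    fix c
    have qA: "qf A F c = qf G F c - complex_of_real (d\<^sup>2) * (cnj (c w) * c w)"
      unfolding A_def by (rule qf_minus_point[OF finF wF])
    define N where "N = (Re (c w))\<^sup>2 + (Im (c w))\<^sup>2"
    have cN: "cnj (c w) * c w = complex_of_real N" unfolding N_def
      by (metis complex_mult_cnj mult.commute)
    have N0: "0 \<le> N" unfolding N_def by simp
    have real: "qf A F c \<in> \<real>" unfolding qA cN using Gpsd unfolding psd_on_def by auto
    have "Re (qf G F c) \<ge> d\<^sup>2 * N"
    proof (cases "c w = 0")
      case True
      then have "N = 0" unfolding N_def by simp
      then show ?thesis using Qg0 by simp
    next
      case False
      define a where "a = (\<lambda>x. c x / c w)"
      have ca: "c = (\<lambda>x. c w * a x)" unfolding a_def using False by auto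
      have "qf G F c = cnj (c w) * c w * qf G F a" by (subst ca, rule qf_smult)
      then have "Re (qf G F c) = N * Re (qf G F a)" unfolding cN by simp
      moreover have "d\<^sup>2 \<le> Re (qf G F a)" using key False unfolding a_def by simp
      ultimately show ?thesis using N0 by (simp add: mult_left_mono mult.commute)
    qed
    then have "0 \<le> Re (qf A F c)" unfolding qA cN by simp
    then show "qf A F c \<in> \<real> \<and> 0 \<le> Re (qf A F c)" using real by simp
  qed
  have Spsd: "psd_on (\<lambda>x y. A x y * hn x y) F" by (rule schur_product[OF finF Apsd hnpsd])
  have AhL: "(\<lambda>x y. A x y * hn x y) = (\<lambda>x y. L x y - complex_of_real (d\<^sup>2) * (if x = w \<and> y = w then 1 else 0))"
    unfolding A_def LGh using hww by (auto simp: fun_eq_iff algebra_simps)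
  have "d \<le> sqrt (Re (qf L F (coef c)))" for c
  proof -
    have cw: "coef c w = 1" unfolding coef_def by simp
    have "0 \<le> Re (qf (\<lambda>x y. A x y * hn x y) F (coef c))" using Spsd unfolding psd_on_def by blast
    also have "qf (\<lambda>x y. A x y * hn x y) F (coef c) = qf L F (coef c) - complex_of_real (d\<^sup>2)"
      unfolding AhL qf_minus_point[OF finF wF] cw by simp
    finally have "d\<^sup>2 \<le> Re (qf L F (coef c))" by simp
    then show ?thesis by (rule real_le_rsqrt)
  qed
  then have "d \<le> dist_to_span l w S" unfolding dl by (rule cINF_greatest[rotated]) simp
  then show ?thesis unfolding d_def w_def S_def .
qed

end
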